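(* Let $G$ be a strong $(\ell,d)$-graph with strong $(\ell,d)$-partitions $\pi$ and $\pi'$. Then $p(\pi)=p(\pi')$.
   Context: For a graph $G$ and $U,W\subseteq V(G)$, $\Delta(U,W)=\max\{|N(u)\cap W|,|N(x)\cap U|:u\in U,x\in W\}$ and $\overline\Delta(U,W)$ is defined the same way with $\overline N(v)=V(G)\setminus(N(v)\cup\{v\})$ replacing $N(v)$. A partition $\{V_1,\dots,V_{\ell'}\}$ of $V(G)$ is an $(\ell,d)$-partition if $\ell'\le\ell$ and for each pair of not necessarily distinct $i,j$, $V_i$ is $d$-sparse with respect to $V_j$ ($\Delta(V_i,V_j)\le d$) or $d$-dense with respect to $V_j$ ($\overline\Delta(V_i,V_j)\le d$). It is strong if each bag has at least $5\cdot2^\ell d$ vertices; $G$ is a strong $(\ell,d)$-graph if it has a strong $(\ell,d)$-partition. For a strong $(\ell,d)$-partition $\pi$, define $V_i\sim V_j$ iff for every bag $V_k$, either $V_k$ is $d$-dense with respect to both $V_i$ and $V_j$, or $d$-sparse with respect to both; $p(\pi)$ is the partition of $V(G)$ whose parts are the unions of the bags in each $\sim$-equivalence class. *)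

theory Defs
  imports Main
begin

definition simple_graph :: "'a set \<Rightarrow> ('a \<Rightarrow> 'a \<Rightarrow> bool) \<Rightarrow> bool" where
  "simple_graph V E \<longleftrightarrow> finite V \<and> (\<forall>u v. E u v \<longrightarrow> u \<in> V \<and> v \<in> V)
     \<and> (\<forall>u v. E u v \<longrightarrow> E v u) \<and> (\<forall>v. \<not> E v v)"

definition nbhd :: "'a set \<Rightarrow> ('a \<Rightarrow> 'a \<Rightarrow> bool) \<Rightarrow> 'a \<Rightarrow> 'a set" where
  "nbhd V E v = {u \<in> V. E v u}"

definition conbhd :: "'a set \<Rightarrow> ('a \<Rightarrow> 'a \<Rightarrow> bool) \<Rightarrow> 'a \<Rightarrow> 'a set" where
  "conbhd V E v = V - (nbhd V E v \<union> {v})"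

definition Delta :: "'a set \<Rightarrow> ('a \<Rightarrow> 'a \<Rightarrow> bool) \<Rightarrow> 'a set \<Rightarrow> 'a set \<Rightarrow> nat" where
  "Delta V E U W = Max ((\<lambda>u. card (nbhd V E u \<inter> W)) ` U \<union> (\<lambda>x. card (nbhd V E x \<inter> U)) ` W)"

definition coDelta :: "'a set \<Rightarrow> ('a \<Rightarrow> 'a \<Rightarrow> bool) \<Rightarrow> 'a set \<Rightarrow> 'a set \<Rightarrow> nat" where
  "coDelta V E U W = Max ((\<lambda>u. card (conbhd V E u \<inter> W)) ` U \<union> (\<lambda>x. card (conbhd V E x \<inter> U)) ` W)"

definition sparse :: "'a set \<Rightarrow> ('a \<Rightarrow> 'a \<Rightarrow> bool) \<Rightarrow> nat \<Rightarrow> 'a set \<Rightarrow> 'a set \<Rightarrow> bool" where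
  "sparse V E d U W \<longleftrightarrow> Delta V E U W \<le> d"

definition dense :: "'a set \<Rightarrow> ('a \<Rightarrow> 'a \<Rightarrow> bool) \<Rightarrow> nat \<Rightarrow> 'a set \<Rightarrow> 'a set \<Rightarrow> bool" where
  "dense V E d U W \<longleftrightarrow> coDelta V E U W \<le> d"

definition is_partition :: "'a set \<Rightarrow> 'a set set \<Rightarrow> bool" where
  "is_partition V P \<longleftrightarrow> \<Union>P = V \<and> {} \<notin> P \<and>
     (\<forall>A\<in>P. \<forall>B\<in>P. A \<noteq> B \<longrightarrow> A \<inter> B = {})"

definition ld_partition :: "'a set \<Rightarrow> ('a \<Rightarrow> 'a \<Rightarrow> bool) \<Rightarrow> nat \<Rightarrow> nat \<Rightarrow> 'a set set \<Rightarrow> bool" where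
  "ld_partition V E l d P \<longleftrightarrow> is_partition V P \<and> card P \<le> l \<and>
     (\<forall>A\<in>P. \<forall>B\<in>P. sparse V E d A B \<or> dense V E d A B)"

definition strong_ld_partition :: "'a set \<Rightarrow> ('a \<Rightarrow> 'a \<Rightarrow> bool) \<Rightarrow> nat \<Rightarrow> nat \<Rightarrow> 'a set set \<Rightarrow> bool" where
  "strong_ld_partition V E l d P \<longleftrightarrow> ld_partition V E l d P \<and>
     (\<forall>A\<in>P. card A \<ge> 5 * 2 ^ l * d)"

definition strong_ld_graph :: "'a set \<Rightarrow> ('a \<Rightarrow> 'a \<Rightarrow> bool) \<Rightarrow> nat \<Rightarrow> nat \<Rightarrow> bool" where
  "strong_ld_graph V E l d \<longleftrightarrow> (\<exists>P. strong_ld_partition V E l d P)"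

definition bag_equiv :: "'a set \<Rightarrow> ('a \<Rightarrow> 'a \<Rightarrow> bool) \<Rightarrow> nat \<Rightarrow> 'a set set \<Rightarrow> 'a set \<Rightarrow> 'a set \<Rightarrow> bool" where
  "bag_equiv V E d P A B \<longleftrightarrow> (\<forall>C\<in>P. (dense V E d C A \<and> dense V E d C B) \<or>
                                      (sparse V E d C A \<and> sparse V E d C B))"

text \<open>p(P): unions of the bags in each ~-equivalence class.\<close>
definition coarsening :: "'a set \<Rightarrow> ('a \<Rightarrow> 'a \<Rightarrow> bool) \<Rightarrow> nat \<Rightarrow> 'a set set \<Rightarrow> 'a set set" where
  "coarsening V E d P = (\<lambda>A. \<Union>{B \<in> P. bag_equiv V E d P A B}) ` P"

end

theory Submission
  imports Defs
begin

definition Dd :: "'a set \<Rightarrow> ('a \<Rightarrow> 'a \<Rightarrow> bool) \<Rightarrow> 'a \<Rightarrow> 'a \<Rightarrow> nat" where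
  "Dd V E u v = card {w\<in>V. w \<noteq> u \<and> w \<noteq> v \<and> E u w \<noteq> E v w}"

lemma Dd_sym: "Dd V E u v = Dd V E v u"
  unfolding Dd_def by (metis (no_types, opaque_lifting))

lemma Delta_ge1:
  assumes "finite V" "U \<subseteq> V" "W \<subseteq> V" "u \<in> U"
  shows "card (nbhd V E u \<inter> W) \<le> Delta V E U W"
  unfolding Delta_def
  using finite_subset[OF assms(2,1)] finite_subset[OF assms(3,1)] assms(4) by (intro Max_ge) auto

lemma Delta_ge2:
  assumes "finite V" "U \<subseteq> V" "W \<subseteq> V" "x \<in> W"
  shows "card (nbhd V E x \<inter> U) \<le> Delta V E U W"
  unfolding Delta_def
  using finite_subset[OF assms(2,1)] finite_subset[OF assms(3,1)] assms(4) by (intro Max_ge) auto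

lemma coDelta_ge1:
  assumes "finite V" "U \<subseteq> V" "W \<subseteq> V" "u \<in> U"
  shows "card (conbhd V E u \<inter> W) \<le> coDelta V E U W"
  unfolding coDelta_def
  using finite_subset[OF assms(2,1)] finite_subset[OF assms(3,1)] assms(4) by (intro Max_ge) auto

lemma coDelta_ge2:
  assumes "finite V" "U \<subseteq> V" "W \<subseteq> V" "x \<in> W"
  shows "card (conbhd V E x \<inter> U) \<le> coDelta V E U W"
  unfolding coDelta_def
  using finite_subset[OF assms(2,1)] finite_subset[OF assms(3,1)] assms(4) by (intro Max_ge) auto

lemma Delta_le:
  assumes "finite V" "U \<subseteq> V" "W \<subseteq> V" "U \<noteq> {}"
    "\<forall>u\<in>U. card (nbhd V E u \<inter> W) \<le> k" "\<forall>x\<in>W. card (nbhd V E x \<inter> U) \<le> k"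
  shows "Delta V E U W \<le> k"
  unfolding Delta_def
  using assms by (subst Max_le_iff) (auto intro: finite_subset)

lemma coDelta_le:
  assumes "finite V" "U \<subseteq> V" "W \<subseteq> V" "U \<noteq> {}"
    "\<forall>u\<in>U. card (conbhd V E u \<inter> W) \<le> k" "\<forall>x\<in>W. card (conbhd V E x \<inter> U) \<le> k"
  shows "coDelta V E U W \<le> k"
  unfolding coDelta_def
  using assms by (subst Max_le_iff) (auto intro: finite_subset)

lemma part_facts:
  assumes "ld_partition V E l d P" "simple_graph V E"
  shows "\<And>A. A \<in> P \<Longrightarrow> A \<subseteq> V" "\<And>A. A \<in> P \<Longrightarrow> A \<noteq> {}"
    "\<And>A B x. A \<in> P \<Longrightarrow> B \<in> P \<Longrightarrow> x \<in> A \<Longrightarrow> x \<in> B \<Longrightarrow> A = B"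
    "finite P" "card P \<le> l" "\<And>v. v \<in> V \<Longrightarrow> \<exists>A\<in>P. v \<in> A" "finite V"
    "\<And>A B. A \<in> P \<Longrightarrow> B \<in> P \<Longrightarrow> sparse V E d A B \<or> dense V E d A B"
  using assms unfolding ld_partition_def is_partition_def simple_graph_def
  apply (auto intro: finite_UnionD) by blast+

lemma upper:
  assumes sg: "simple_graph V E" and lp: "ld_partition V E l d P"
    and A: "A \<in> P" and B: "B \<in> P" and eq: "bag_equiv V E d P A B"
    and a: "a \<in> A" and b: "b \<in> B"
  shows "Dd V E a b \<le> 2*d*l"
proof -
  note pf = part_facts[OF lp sg]
  let ?S = "{w\<in>V. w\<noteq>a \<and> w\<noteq>b \<and> E a w \<noteq> E b w}"
  have finS: "finite ?S" using pf(7) by auto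
  have cov: "?S \<subseteq> (\<Union>C\<in>P. ?S \<inter> C)" using pf(6) by blast
  have per: "card (?S \<inter> C) \<le> 2*d" if C: "C \<in> P" for C
  proof -
    from eq C have "(dense V E d C A \<and> dense V E d C B) \<or> (sparse V E d C A \<and> sparse V E d C B)"
      unfolding bag_equiv_def by blast
    then show ?thesis
    proof
      assume h: "dense V E d C A \<and> dense V E d C B"
      have "?S \<inter> C \<subseteq> (conbhd V E a \<inter> C) \<union> (conbhd V E b \<inter> C)"
        unfolding conbhd_def nbhd_def by auto
      moreover have "card (conbhd V E a \<inter> C) \<le> d"
        using coDelta_ge2[OF pf(7) pf(1)[OF C] pf(1)[OF A] a, of E] h unfolding dense_def by linarith
      moreover have "card (conbhd V E b \<inter> C) \<le> d"
        using coDelta_ge2[OF pf(7) pf(1)[OF C] pf(1)[OF B] b, of E] h unfolding dense_def by linarith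
      moreover have "finite (conbhd V E a \<inter> C)" "finite (conbhd V E b \<inter> C)"
        using pf(7) unfolding conbhd_def by auto
      ultimately show ?thesis
        using card_mono[OF finite_UnI] card_Un_le by (smt (verit) le_trans add_le_mono mult_2)
    next
      assume h: "sparse V E d C A \<and> sparse V E d C B"
      have "?S \<inter> C \<subseteq> (nbhd V E a \<inter> C) \<union> (nbhd V E b \<inter> C)"
        unfolding nbhd_def by auto
      moreover have "card (nbhd V E a \<inter> C) \<le> d"
        using Delta_ge2[OF pf(7) pf(1)[OF C] pf(1)[OF A] a, of E] h unfolding sparse_def by linarith
      moreover have "card (nbhd V E b \<inter> C) \<le> d"
        using Delta_ge2[OF pf(7) pf(1)[OF C] pf(1)[OF B] b, of E] h unfolding sparse_def by linarith
      moreover have "finite (nbhd V E a \<inter> C)" "finite (nbhd V E b \<inter> C)"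
        using pf(7) unfolding nbhd_def by auto
      ultimately show ?thesis
        using card_mono[OF finite_UnI] card_Un_le by (smt (verit) le_trans add_le_mono mult_2)
    qed
  qed
  have "Dd V E a b = card ?S" unfolding Dd_def by simp
  also have "\<dots> \<le> card (\<Union>C\<in>P. ?S \<inter> C)"
    using cov pf(4) finS by (intro card_mono) auto
  also have "\<dots> \<le> (\<Sum>C\<in>P. card (?S \<inter> C))" by (rule card_UN_le[OF pf(4)])
  also have "\<dots> \<le> (\<Sum>C\<in>P. 2*d)" by (rule sum_mono) (rule per)
  also have "\<dots> = card P * (2*d)" by simp
  also have "\<dots> \<le> l * (2*d)" using pf(5) by simp
  finally show ?thesis by (simp add: mult.commute mult.left_commute)
qed

lemma lower:
  assumes sg: "simple_graph V E" and lp: "ld_partition V E l d P"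
    and big: "\<forall>C\<in>P. card C \<ge> 5 * 2 ^ l * d"
    and A: "A \<in> P" and B: "B \<in> P" and C: "C \<in> P"
    and h1: "dense V E d C A" and h2: "sparse V E d C B"
    and h3: "\<not> sparse V E d C A" and h4: "\<not> dense V E d C B"
    and a: "a \<in> A" and b: "b \<in> B"
  shows "2*d*l < Dd V E a b"
proof -
  note pf = part_facts[OF lp sg]
  have irr: "\<And>v. \<not> E v v" and sym: "\<And>u v. E u v \<Longrightarrow> E v u"
    using sg unfolding simple_graph_def by auto
  let ?S = "{w\<in>V. w\<noteq>a \<and> w\<noteq>b \<and> E a w \<noteq> E b w}"
  let ?S' = "{w\<in>C. w\<noteq>a \<and> w\<noteq>b \<and> E a w \<noteq> E b w}"
  have finS: "finite ?S" using pf(7) by auto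
  have SS: "?S' \<subseteq> ?S" using pf(1)[OF C] by auto
  have cardS: "card ?S' \<le> Dd V E a b" unfolding Dd_def using card_mono[OF finS SS] .
  have aV: "a \<in> V" and bV: "b \<in> V" using pf(1)[OF A] pf(1)[OF B] a b by auto
  have finC: "finite C" using pf(1)[OF C] pf(7) finite_subset by blast
  have ca: "card (conbhd V E a \<inter> C) \<le> d"
    using coDelta_ge2[OF pf(7) pf(1)[OF C] pf(1)[OF A] a, of E] h1 unfolding dense_def by linarith
  have cb: "card (nbhd V E b \<inter> C) \<le> d"
    using Delta_ge2[OF pf(7) pf(1)[OF C] pf(1)[OF B] b, of E] h2 unfolding sparse_def by linarith
  show ?thesis
  proof (cases "d = 0")
    case False
    have cover: "C \<subseteq> ?S' \<union> (conbhd V E a \<inter> C) \<union> (nbhd V E b \<inter> C) \<union> {a,b}"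
      using pf(1)[OF C] unfolding conbhd_def nbhd_def by auto
    have "card C \<le> card (?S' \<union> (conbhd V E a \<inter> C) \<union> (nbhd V E b \<inter> C) \<union> {a,b})"
      using cover finC by (intro card_mono) auto
    also have "\<dots> \<le> card ?S' + card (conbhd V E a \<inter> C) + card (nbhd V E b \<inter> C) + card {a,b}"
      by (meson card_Un_le le_trans add_le_mono order_refl)
    also have "\<dots> \<le> card ?S' + d + d + 2"
    proof -
      have "card {a,b} \<le> 2" by (simp add: card_insert_if)
      thus ?thesis using ca cb by linarith
    qed
    finally have c1: "card C \<le> card ?S' + d + d + 2" .
    have "card P \<ge> 1" using pf(4) C by (metis One_nat_def Suc_leI card_gt_0_iff empty_iff)
    hence l1: "l \<ge> 1" using pf(5) by linarith
    have "l + 1 \<le> 2 ^ l" by (induction l) auto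
    hence "5 * (l + 1) * d \<le> 5 * 2 ^ l * d" by simp
    hence "5 * (l + 1) * d \<le> card C" using big C le_trans by blast
    hence "5 * (l + 1) * d \<le> card ?S' + d + d + 2" using c1 by linarith
    moreover have "3 * d * l \<ge> 3" using l1 False by (simp add: Suc_le_eq)
    ultimately have "2*d*l < card ?S'" by (simp add: algebra_simps)
    then show ?thesis using cardS by linarith
  next
    case True
    have ca0: "conbhd V E a \<inter> C = {}" using ca True finC by simp
    have cb0: "nbhd V E b \<inter> C = {}" using cb True finC by simp
    show ?thesis
    proof (cases "\<exists>c\<in>C. c \<noteq> a \<and> c \<noteq> b")
      case True
      then obtain c where c: "c \<in> C" "c \<noteq> a" "c \<noteq> b" by blast
      have cV: "c \<in> V" using pf(1)[OF C] c by auto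
      have "E a c" using ca0 c cV unfolding conbhd_def nbhd_def by auto
      moreover have "\<not> E b c" using cb0 c cV unfolding nbhd_def by auto
      ultimately have "c \<in> ?S'" using c by auto
      hence "card ?S' > 0" using finC by (metis (no_types, lifting) card_gt_0_iff empty_iff finite_subset mem_Collect_eq subsetI)
      then show ?thesis using cardS \<open>d = 0\<close> by simp
    next
      case False
      hence Csub: "C \<subseteq> {a,b}" by auto
      have "\<exists>c\<in>C. \<exists>x\<in>A. E x c"
      proof (rule ccontr)
        assume nn: "\<not> ?thesis"
        have "Delta V E C A \<le> 0"
        proof (rule Delta_le[OF pf(7) pf(1)[OF C] pf(1)[OF A] pf(2)[OF C]])
          have "\<forall>u\<in>C. nbhd V E u \<inter> A = {}" using nn sym unfolding nbhd_def by blast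
          thus "\<forall>u\<in>C. card (nbhd V E u \<inter> A) \<le> 0" by simp
          have "\<forall>x\<in>A. nbhd V E x \<inter> C = {}" using nn unfolding nbhd_def by blast
          thus "\<forall>x\<in>A. card (nbhd V E x \<inter> C) \<le> 0" by simp
        qed
        thus False using h3 True unfolding sparse_def by simp
      qed
      then obtain c x where cx: "c \<in> C" "x \<in> A" "E x c" by blast
      have AB: "A \<noteq> B \<or> C \<noteq> B" using h1 h4 by auto
      show ?thesis
      proof (cases "c = a")
        case True
        hence "C = A" using pf(3)[OF C A] cx a by auto
        hence "x = b" using cx Csub irr True by auto
        hence "A = B" using pf(3)[OF A B] cx b by auto
        thus ?thesis using \<open>C = A\<close> AB by simp
      next
        case False
        hence "c = b" using Csub cx by auto
        hence CB: "C = B" using pf(3)[OF C B] cx b by auto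
        have aB: "a \<notin> B" using pf(3)[OF A B] a CB AB by auto
        hence Bb: "B = {b}" using Csub CB b by auto
        have "coDelta V E C B \<le> 0"
          by (rule coDelta_le[OF pf(7) pf(1)[OF C] pf(1)[OF B] pf(2)[OF C]])
             (use CB Bb in \<open>auto simp: conbhd_def\<close>)
        thus ?thesis using h4 True unfolding dense_def by simp
      qed
    qed
  qed
qed

lemma class_eq:
  assumes sg: "simple_graph V E" and sp: "strong_ld_partition V E l d P"
    and A: "A \<in> P" and a: "a \<in> A"
  shows "\<Union>{B \<in> P. bag_equiv V E d P A B} = {u\<in>V. Dd V E u a \<le> 2*d*l}"
proof -
  have lp: "ld_partition V E l d P" and big: "\<forall>C\<in>P. card C \<ge> 5 * 2 ^ l * d"
    using sp unfolding strong_ld_partition_def by auto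
  note pf = part_facts[OF lp sg]
  show ?thesis
  proof (intro equalityI subsetI)
    fix u assume "u \<in> \<Union>{B \<in> P. bag_equiv V E d P A B}"
    then obtain B where B: "B \<in> P" "bag_equiv V E d P A B" "u \<in> B" by blast
    have "Dd V E a u \<le> 2*d*l" by (rule upper[OF sg lp A B(1) B(2) a B(3)])
    thus "u \<in> {u\<in>V. Dd V E u a \<le> 2*d*l}" using B pf(1)[OF B(1)] Dd_sym[of V E a u] by auto
  next
    fix u assume u: "u \<in> {u\<in>V. Dd V E u a \<le> 2*d*l}"
    then obtain B where B: "B \<in> P" "u \<in> B" using pf(6) by blast
    have "bag_equiv V E d P A B"
    proof (rule ccontr)
      assume "\<not> bag_equiv V E d P A B"
      then obtain C where C: "C \<in> P" and
        n1: "\<not> (dense V E d C A \<and> dense V E d C B)" and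
        n2: "\<not> (sparse V E d C A \<and> sparse V E d C B)"
        unfolding bag_equiv_def by blast
      have o1: "sparse V E d C A \<or> dense V E d C A" using pf(8)[OF C A] .
      have o2: "sparse V E d C B \<or> dense V E d C B" using pf(8)[OF C B(1)] .
      have "2*d*l < Dd V E a u"
      proof (cases "dense V E d C A")
        case True
        then show ?thesis using n1 n2 o1 o2
          by (intro lower[OF sg lp big A B(1) C _ _ _ _ a B(2)]) auto
      next
        case False
        then have "2*d*l < Dd V E u a" using n1 n2 o1 o2
          by (intro lower[OF sg lp big B(1) A C _ _ _ _ B(2) a]) auto
        thus ?thesis using Dd_sym by metis
      qed
      thus False using u Dd_sym by (metis (no_types, lifting) mem_Collect_eq not_le)
    qed
    thus "u \<in> \<Union>{B \<in> P. bag_equiv V E d P A B}" using B by blast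
  qed
qed

lemma coarsening_char:
  assumes sg: "simple_graph V E" and sp: "strong_ld_partition V E l d P"
  shows "coarsening V E d P = (\<lambda>v. {u\<in>V. Dd V E u v \<le> 2*d*l}) ` V"
proof -
  have lp: "ld_partition V E l d P"
    using sp unfolding strong_ld_partition_def by auto
  note pf = part_facts[OF lp sg]
  show ?thesis
  proof (intro equalityI subsetI)
    fix X assume "X \<in> coarsening V E d P"
    then obtain A where A: "A \<in> P" "X = \<Union>{B \<in> P. bag_equiv V E d P A B}"
      unfolding coarsening_def by blast
    obtain a where a: "a \<in> A" using pf(2)[OF A(1)] by blast
    have "X = {u\<in>V. Dd V E u a \<le> 2*d*l}" using class_eq[OF sg sp A(1) a] A(2) by simp
    moreover have "a \<in> V" using pf(1)[OF A(1)] a by blast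
    ultimately show "X \<in> (\<lambda>v. {u\<in>V. Dd V E u v \<le> 2*d*l}) ` V" by blast
  next
    fix X assume "X \<in> (\<lambda>v. {u\<in>V. Dd V E u v \<le> 2*d*l}) ` V"
    then obtain v where v: "v \<in> V" "X = {u\<in>V. Dd V E u v \<le> 2*d*l}" by blast
    obtain A where A: "A \<in> P" "v \<in> A" using pf(6)[OF v(1)] by blast
    have "X = \<Union>{B \<in> P. bag_equiv V E d P A B}" using class_eq[OF sg sp A] v(2) by simp
    thus "X \<in> coarsening V E d P" using A(1) unfolding coarsening_def by blast
  qed
qed

theorem theorem2p6:
  fixes V :: "'a set" and E :: "'a \<Rightarrow> 'a \<Rightarrow> bool" and l d :: nat
    and P P' :: "'a set set"
  assumes "simple_graph V E"
    and "strong_ld_partition V E l d P"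
    and "strong_ld_partition V E l d P'"
  shows "coarsening V E d P = coarsening V E d P'"
  using coarsening_char[OF assms(1,2)] coarsening_char[OF assms(1,3)] by simp

end
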